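(* Let $N_T,N_R\ge 1$ be integers, $N=N_TN_R$, $\mathcal{R}>0$, $\beta>0$, and define $\xi=[2\pi(2^{2\mathcal{R}}-1)]^{-1/2}$, $\tau=2^{\mathcal{R}}-1$, $\varphi_H=\tau+\frac{1}{2\xi\sqrt\beta}$, $\varphi_L=\tau-\frac{1}{2\xi\sqrt\beta}$. For $\bar\gamma_k>0$ let $$F_{\mathrm{MRC}}(\gamma)=\Big\{1-e^{-\gamma/\bar\gamma_k}\sum_{n=0}^{N_R-1}\frac{1}{n!}\Big(\frac{\gamma}{\bar\gamma_k}\Big)^n\Big\}^{N_T},\qquad F_{\mathrm{SC}}(\gamma)=\{1-e^{-\gamma/\bar\gamma_k}\}^{N},$$ and $\bar\varepsilon_k^{\mathrm{TAS/MRC}}=\xi\sqrt\beta\int_{\varphi_L}^{\varphi_H}F_{\mathrm{MRC}}(\gamma)d\gamma$, $\bar\varepsilon_k^{\mathrm{TAS/SC}}=\xi\sqrt\beta\int_{\varphi_L}^{\varphi_H}F_{\mathrm{SC}}(\gamma)d\gamma$. Define $$\tilde\varepsilon_k^{\infty\,\mathrm{TAS/MRC}}=\frac{\xi\sqrt\beta\,[\varphi_H^{N+1}-\varphi_L^{N+1}]}{(N_R!)^{N_T}\,\bar\gamma_k^{N}\,(N+1)},\qquad \tilde\varepsilon_k^{\infty\,\mathrm{TAS/SC}}=\frac{\xi\sqrt\beta\,[\varphi_H^{N+1}-\varphi_L^{N+1}]}{\bar\gamma_k^{N}\,(N+1)}.$$ Then, as $\bar\gamma_k\to\infty$, $\bar\varepsilon_k^{\mathrm{TAS/MRC}}\sim\tilde\varepsilon_k^{\infty\,\mathrm{TAS/MRC}}$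 and $\bar\varepsilon_k^{\mathrm{TAS/SC}}\sim\tilde\varepsilon_k^{\infty\,\mathrm{TAS/SC}}$ (i.e., the ratios tend to $1$).
   Context: $\bar\varepsilon_k^{\mathcal X}$ is the paper's approximation of the average per-hop block error rate in the finite-blocklength regime for transmit antenna selection with maximum ratio combining (MRC) or selection combining (SC) over Rayleigh fading with average per-link SNR $\bar\gamma_k$; $\tilde\varepsilon_k^{\infty\,\mathcal X}$ is the asymptotic per-hop BLER. *)

theory Defs
  imports "HOL-Analysis.Analysis" "HOL-Library.Landau_Symbols"
begin

definition xi :: "real \<Rightarrow> real" where
  "xi R = 1 / sqrt (2 * pi * (2 powr (2 * R) - 1))"

definition tau :: "real \<Rightarrow> real" where
  "tau R = 2 powr R - 1"

definition phiH :: "real \<Rightarrow> real \<Rightarrow> real" where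
  "phiH R \<beta> = tau R + 1 / (2 * xi R * sqrt \<beta>)"

definition phiL :: "real \<Rightarrow> real \<Rightarrow> real" where
  "phiL R \<beta> = tau R - 1 / (2 * xi R * sqrt \<beta>)"

definition F_MRC :: "nat \<Rightarrow> nat \<Rightarrow> real \<Rightarrow> real \<Rightarrow> real" where
  "F_MRC NT NR g \<gamma> =
     (1 - exp (- \<gamma> / g) * (\<Sum>n<NR. (\<gamma> / g) ^ n / fact n)) ^ NT"

definition F_SC :: "nat \<Rightarrow> nat \<Rightarrow> real \<Rightarrow> real \<Rightarrow> real" where
  "F_SC NT NR g \<gamma> = (1 - exp (- \<gamma> / g)) ^ (NT * NR)"

definition eps_MRC :: "nat \<Rightarrow> nat \<Rightarrow> real \<Rightarrow> real \<Rightarrow> real \<Rightarrow> real" where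
  "eps_MRC NT NR R \<beta> g =
     xi R * sqrt \<beta> * integral {phiL R \<beta>..phiH R \<beta>} (F_MRC NT NR g)"

definition eps_SC :: "nat \<Rightarrow> nat \<Rightarrow> real \<Rightarrow> real \<Rightarrow> real \<Rightarrow> real" where
  "eps_SC NT NR R \<beta> g =
     xi R * sqrt \<beta> * integral {phiL R \<beta>..phiH R \<beta>} (F_SC NT NR g)"

definition eps_inf_MRC :: "nat \<Rightarrow> nat \<Rightarrow> real \<Rightarrow> real \<Rightarrow> real \<Rightarrow> real" where
  "eps_inf_MRC NT NR R \<beta> g =
     xi R * sqrt \<beta> * (phiH R \<beta> ^ (NT * NR + 1) - phiL R \<beta> ^ (NT * NR + 1))
     / (fact NR ^ NT * g ^ (NT * NR) * real (NT * NR + 1))"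

definition eps_inf_SC :: "nat \<Rightarrow> nat \<Rightarrow> real \<Rightarrow> real \<Rightarrow> real \<Rightarrow> real" where
  "eps_inf_SC NT NR R \<beta> g =
     xi R * sqrt \<beta> * (phiH R \<beta> ^ (NT * NR + 1) - phiL R \<beta> ^ (NT * NR + 1))
     / (g ^ (NT * NR) * real (NT * NR + 1))"

end

theory Submission
  imports Defs
begin

definition Sk :: "nat \<Rightarrow> real \<Rightarrow> real" where
  "Sk k x = (\<Sum>n. inverse (fact (n + k)) * x ^ n)"

lemma Sk_summable: "summable (\<lambda>n. inverse (fact (n + k)) * (x::real) ^ n)"
proof (rule summable_comparison_test'[where N=0])
  show "summable (\<lambda>n. inverse (fact n) * \<bar>x\<bar> ^ n)" by (rule summable_exp)
  fix n :: nat
  have "inverse (fact (n + k) :: real) \<le> inverse (fact n)"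
    by (intro le_imp_inverse_le) (auto intro: fact_mono)
  then show "norm (inverse (fact (n + k)) * x ^ n) \<le> inverse (fact n) * \<bar>x\<bar> ^ n"
    by (auto simp: abs_mult power_abs intro!: mult_right_mono)
qed

lemma Sk_isCont: "isCont (Sk k) x"
proof -
  have "isCont (\<lambda>x. \<Sum>n. inverse (fact (n + k)) * x ^ n) x"
    by (rule isCont_powser[where K="\<bar>x\<bar> + 1"]) (auto intro: Sk_summable)
  then show ?thesis unfolding Sk_def[abs_def] .
qed

lemma Sk_decomp:
  "1 - exp (- x) * (\<Sum>n<k. x ^ n / fact n) = x ^ k * (exp (- x) * Sk k x)"
proof -
  have "(\<lambda>n. x^n /\<^sub>R fact n) sums exp x" by (rule exp_converges)
  then have e: "(\<lambda>n. x^n / fact n) sums exp x" by (simp add: divide_inverse mult.commute)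
  have "(\<lambda>i. x^(i+k) / fact (i+k)) sums (exp x - (\<Sum>i<k. x^i / fact i))"
    using sums_iff_shift[of "\<lambda>n. x^n / fact n" k] e by simp
  moreover have "(\<lambda>i. x^k * (inverse (fact (i + k)) * x ^ i)) sums (x^k * Sk k x)"
    unfolding Sk_def by (intro sums_mult summable_sums Sk_summable)
  moreover have "(\<lambda>i. x^k * (inverse (fact (i + k)) * x ^ i)) = (\<lambda>i. x^(i+k) / fact (i+k))"
    by (auto simp: power_add divide_inverse)
  ultimately have "x^k * Sk k x = exp x - (\<Sum>i<k. x^i / fact i)"
    using sums_unique2 by metis
  moreover have "exp (-x) * exp x = 1" by (simp add: exp_minus_inverse mult.commute)
  ultimately have "1 - exp (- x) * (\<Sum>n<k. x ^ n / fact n)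
      = exp (-x) * exp x - exp (- x) * (\<Sum>n<k. x ^ n / fact n)" by simp
  also have "\<dots> = exp (-x) * (x^k * Sk k x)"
    using \<open>x^k * Sk k x = exp x - (\<Sum>i<k. x^i / fact i)\<close>
    by (simp add: right_diff_distrib)
  finally show ?thesis by (metis mult.left_commute)
qed

lemma int_limit:
  fixes Q :: "real \<Rightarrow> real" and a b :: real
  assumes Qc: "\<And>x. isCont Q x" and ab: "a \<le> b"
  shows "((\<lambda>g. integral {a..b} (\<lambda>y. y ^ N * Q (y / g))) \<longlongrightarrow>
            integral {a..b} (\<lambda>y. y ^ N * Q 0)) at_top"
proof (rule tendstoI)
  fix e :: real assume e: "e > 0"
  define M where "M = (\<bar>a\<bar> + \<bar>b\<bar>) ^ N"
  define e' where "e' = e / ((b - a + 1) * (M + 1))"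
  have M0: "M \<ge> 0" unfolding M_def by simp
  have e'0: "e' > 0" unfolding e'_def using e ab M0 by simp
  obtain d where d: "d > 0" and dQ: "\<And>x. \<bar>x\<bar> < d \<Longrightarrow> \<bar>Q x - Q 0\<bar> < e'"
    using Qc[of 0, unfolded continuous_at_eps_delta] e'0 by (auto simp: dist_real_def)
  have "eventually (\<lambda>g. g > (\<bar>a\<bar> + \<bar>b\<bar>) / d + 1) at_top"
    by (rule eventually_gt_at_top)
  then show "eventually (\<lambda>g. dist (integral {a..b} (\<lambda>y. y ^ N * Q (y / g)))
            (integral {a..b} (\<lambda>y. y ^ N * Q 0)) < e) at_top"
  proof eventually_elim
    case (elim g)
    have X0: "(\<bar>a\<bar> + \<bar>b\<bar>) / d \<ge> 0" using d by simp
    have X1: "0 < (\<bar>a\<bar> + \<bar>b\<bar>) / d + 1" using X0 by simp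
    have g0: "g > 0" using less_trans[OF X1 elim] .
    have cont: "continuous_on {a..b} (\<lambda>y. y ^ N * Q (y / g))"
    proof -
      have cU: "continuous_on UNIV Q" using Qc by (simp add: continuous_on_eq_continuous_at)
      have cd: "continuous_on {a..b} (\<lambda>y. y / g)" using g0 by (intro continuous_intros) auto
      have cQ: "continuous_on {a..b} (\<lambda>y. Q (y / g))"
        by (rule continuous_on_compose2[OF cU cd]) simp
      show ?thesis by (intro continuous_on_mult continuous_on_power continuous_on_id cQ)
    qed
    have cont0: "continuous_on {a..b} (\<lambda>y. y ^ N * Q 0)" by (intro continuous_intros)
    have "integral {a..b} (\<lambda>y. y ^ N * Q (y / g)) - integral {a..b} (\<lambda>y. y ^ N * Q 0)
        = integral {a..b} (\<lambda>y. y ^ N * Q (y / g) - y ^ N * Q 0)"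
      by (rule integral_diff[symmetric]) (auto intro: integrable_continuous_interval cont cont0)
    also have "norm \<dots> \<le> (M * e') * (b - a)"
    proof (rule integral_bound[OF ab])
      show "continuous_on {a..b} (\<lambda>y. y ^ N * Q (y / g) - y ^ N * Q 0)"
        by (intro continuous_on_diff cont cont0)
      fix t assume t: "t \<in> {a..b}"
      have ta: "\<bar>t\<bar> \<le> \<bar>a\<bar> + \<bar>b\<bar>" using t by auto
      have "\<bar>t / g\<bar> = \<bar>t\<bar> / g" using g0 by simp
      also have "\<dots> \<le> (\<bar>a\<bar> + \<bar>b\<bar>) / g" using ta g0 by (simp add: divide_right_mono)
      also have "\<dots> < d"
      proof -
        have "(\<bar>a\<bar> + \<bar>b\<bar>) / d < (\<bar>a\<bar> + \<bar>b\<bar>) / d + 1" by simp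
        then have "(\<bar>a\<bar> + \<bar>b\<bar>) / d < g" using elim by (rule less_trans)
        then have "\<bar>a\<bar> + \<bar>b\<bar> < g * d" using d by (simp only: pos_divide_less_eq)
        then show ?thesis using g0 by (simp only: pos_divide_less_eq mult.commute)
      qed
      finally have "\<bar>Q (t/g) - Q 0\<bar> < e'" by (rule dQ)
      moreover have "\<bar>t\<bar> ^ N \<le> M" unfolding M_def using ta by (simp add: power_mono)
      ultimately have "\<bar>t\<bar> ^ N * \<bar>Q (t/g) - Q 0\<bar> \<le> M * e'"
        using M0 by (intro mult_mono) auto
      then show "norm (t ^ N * Q (t / g) - t ^ N * Q 0) \<le> M * e'"
        by (simp add: abs_mult power_abs right_diff_distrib[symmetric])
    qed
    also have "\<dots> < e"
    proof -
      have pos: "(b - a + 1) * (M + 1) > 0" using M0 ab by simp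
      have eq: "e' * ((b - a + 1) * (M + 1)) = e" unfolding e'_def using M0 ab by simp
      have "(M+1)*(b-a+1) = M*(b-a) + M + (b-a) + 1" by (simp add: algebra_simps)
      then have lt: "M*(b-a) < (b - a + 1) * (M + 1)" using M0 ab by (simp add: mult.commute)
      have "e' * (M*(b-a)) < e' * ((b - a + 1) * (M + 1))"
        by (rule mult_strict_left_mono[OF lt e'0])
      then show ?thesis using eq by (simp add: mult_ac)
    qed
    finally show ?case by (simp add: dist_real_def)
  qed
qed


lemma pow_aux: "(x::real) ^ N + real N * x ^ (N - Suc 0) * x = real (Suc N) * x ^ N"
  by (cases N) (simp_all add: algebra_simps)

lemma power_integral:
  fixes a b :: real assumes "a \<le> b"
  shows "integral {a..b} (\<lambda>y. y ^ N) = (b ^ (N+1) - a ^ (N+1)) / real (N + 1)"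
proof -
  have "((\<lambda>y. y ^ N) has_integral ((\<lambda>y. y ^ (N+1) / real (N+1)) b - (\<lambda>y. y ^ (N+1) / real (N+1)) a)) {a..b}"
    apply (rule fundamental_theorem_of_calculus[OF assms])
    by (auto intro!: derivative_eq_intros simp: has_real_derivative_iff_has_vector_derivative[symmetric] pow_aux simp del: of_nat_Suc)
  then show ?thesis by (simp add: integral_unique diff_divide_distrib)
qed

lemma gen_equiv:
  fixes a b c :: real and k m :: nat
  assumes ab: "a < b" and D: "b ^ (m*k+1) - a ^ (m*k+1) \<noteq> 0" and c: "c \<noteq> 0"
  shows "(\<lambda>g. c * integral {a..b} (\<lambda>y. (1 - exp (- y / g) * (\<Sum>n<k. (y / g) ^ n / fact n)) ^ m))
     \<sim>[at_top] (\<lambda>g. c * (b ^ (m*k+1) - a ^ (m*k+1)) / (fact k ^ m * g ^ (m*k) * real (m*k+1)))"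
proof (rule asymp_equivI')
  define N where "N = m * k"
  define D where "D = b ^ (N+1) - a ^ (N+1)"
  define Q where "Q x = (exp (- x) * Sk k x) ^ m" for x
  define I where "I g = integral {a..b} (\<lambda>y. y ^ N * Q (y / g))" for g
  have DN: "D \<noteq> 0" using D unfolding D_def N_def .
  have Qc: "isCont Q x" for x unfolding Q_def[abs_def]
    by (intro continuous_intros Sk_isCont)
  have Q0: "Q 0 = inverse (fact k) ^ m"
    unfolding Q_def Sk_def using powser_zero[of "\<lambda>n. inverse (fact (n + k)) :: real"] by simp
  have I0: "integral {a..b} (\<lambda>y. y ^ N * Q 0) = Q 0 * D / real (N + 1)"
    using power_integral[of a b N] ab unfolding D_def by (simp add: mult.commute)
  have lim: "(I \<longlongrightarrow> Q 0 * D / real (N + 1)) at_top"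
    unfolding I_def using int_limit[OF Qc, of a b N] ab I0 by simp
  have lim2: "((\<lambda>g. I g * (fact k ^ m * real (N+1) / D)) \<longlongrightarrow>
      Q 0 * D / real (N + 1) * (fact k ^ m * real (N+1) / D)) at_top"
    by (intro tendsto_mult lim tendsto_const)
  have one: "Q 0 * D / real (N + 1) * (fact k ^ m * real (N+1) / D) = 1"
    using DN unfolding Q0 by (simp add: field_simps power_inverse[symmetric] del: of_nat_Suc)
  have ev: "eventually (\<lambda>g. I g * (fact k ^ m * real (N+1) / D) =
     c * integral {a..b} (\<lambda>y. (1 - exp (- y / g) * (\<Sum>n<k. (y / g) ^ n / fact n)) ^ m) /
     (c * (b ^ (m*k+1) - a ^ (m*k+1)) / (fact k ^ m * g ^ (m*k) * real (m*k+1)))) at_top"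
    using eventually_gt_at_top[of 0]
  proof eventually_elim
    case (elim g)
    have "(1 - exp (- y / g) * (\<Sum>n<k. (y / g) ^ n / fact n)) ^ m = y ^ N * Q (y / g) / g ^ N" for y
    proof -
      have "(1 - exp (- y / g) * (\<Sum>n<k. (y / g) ^ n / fact n)) ^ m = ((y/g)^k * (exp (- (y/g)) * Sk k (y/g))) ^ m"
        using Sk_decomp[of "y/g" k] by simp
      also have "\<dots> = (y/g) ^ N * Q (y / g)"
        unfolding Q_def N_def by (simp add: power_mult_distrib power_mult mult.commute)
      finally show ?thesis by (simp add: power_divide)
    qed
    then have "integral {a..b} (\<lambda>y. (1 - exp (- y / g) * (\<Sum>n<k. (y / g) ^ n / fact n)) ^ m) = I g / g ^ N"
      unfolding I_def by simp
    then show ?case using elim DN c unfolding N_def D_def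
      by (simp add: field_simps del: of_nat_Suc)
  qed
  show "((\<lambda>g. c * integral {a..b} (\<lambda>y. (1 - exp (- y / g) * (\<Sum>n<k. (y / g) ^ n / fact n)) ^ m) /
     (c * (b ^ (m*k+1) - a ^ (m*k+1)) / (fact k ^ m * g ^ (m*k) * real (m*k+1)))) \<longlongrightarrow> 1) at_top"
    using tendsto_cong[OF ev] lim2 one by simp
qed


theorem mainTheorem3:
  fixes NT NR :: nat and R \<beta> :: real
  assumes "NT \<ge> 1" and "NR \<ge> 1" and "R > 0" and "\<beta> > 0"
  shows "(\<lambda>g. eps_MRC NT NR R \<beta> g) \<sim>[at_top] (\<lambda>g. eps_inf_MRC NT NR R \<beta> g)
       \<and> (\<lambda>g. eps_SC NT NR R \<beta> g) \<sim>[at_top] (\<lambda>g. eps_inf_SC NT NR R \<beta> g)"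
proof -
  define a where "a = phiL R \<beta>"
  define b where "b = phiH R \<beta>"
  define c where "c = xi R * sqrt \<beta>"
  define h where "h = 1 / (2 * xi R * sqrt \<beta>)"
  have "2 powr (2 * R) > 1" using powr_less_mono[of 0 "2*R" 2] assms by simp
  then have xi0: "xi R > 0" unfolding xi_def by simp
  have c0: "c \<noteq> 0" unfolding c_def using xi0 assms by simp
  have h0: "h > 0" unfolding h_def using xi0 assms by simp
  have t0: "tau R > 0" unfolding tau_def using powr_less_mono[of 0 R 2] assms by simp
  have aeq: "a = tau R - h" and beq: "b = tau R + h"
    unfolding a_def b_def h_def phiL_def phiH_def by auto
  have ab: "a < b" using aeq beq h0 by simp
  have Dp: "b ^ (n+1) - a ^ (n+1) \<noteq> 0" for n
  proof -
    have "\<bar>a\<bar> < b" using aeq beq h0 t0 by arith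
    then have "\<bar>a\<bar> ^ (n+1) < b ^ (n+1)" by (intro power_strict_mono) auto
    moreover have "a ^ (n+1) \<le> \<bar>a\<bar> ^ (n+1)"
      by (metis abs_ge_self power_abs)
    ultimately show ?thesis by linarith
  qed
  have eM: "(\<lambda>g. eps_MRC NT NR R \<beta> g) = (\<lambda>g. c * integral {a..b}
      (\<lambda>y. (1 - exp (- y / g) * (\<Sum>n<NR. (y / g) ^ n / fact n)) ^ NT))"
    unfolding eps_MRC_def F_MRC_def[abs_def] a_def b_def c_def by (rule refl)
  have iM: "(\<lambda>g. eps_inf_MRC NT NR R \<beta> g) = (\<lambda>g. c * (b ^ (NT*NR+1) - a ^ (NT*NR+1))
      / (fact NR ^ NT * g ^ (NT*NR) * real (NT*NR+1)))"
    unfolding eps_inf_MRC_def a_def b_def c_def by (rule refl)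
  have 1: "(\<lambda>g. eps_MRC NT NR R \<beta> g) \<sim>[at_top] (\<lambda>g. eps_inf_MRC NT NR R \<beta> g)"
    unfolding eM iM by (rule gen_equiv[OF ab Dp[of "NT*NR"] c0])
  have eS: "(\<lambda>g. eps_SC NT NR R \<beta> g) = (\<lambda>g. c * integral {a..b}
      (\<lambda>y. (1 - exp (- y / g) * (\<Sum>n<1. (y / g) ^ n / fact n)) ^ (NT*NR)))"
    unfolding eps_SC_def F_SC_def[abs_def] a_def b_def c_def by simp
  have iS: "(\<lambda>g. eps_inf_SC NT NR R \<beta> g) = (\<lambda>g. c * (b ^ (NT*NR*1+1) - a ^ (NT*NR*1+1))
      / (fact 1 ^ (NT*NR) * g ^ (NT*NR*1) * real (NT*NR*1+1)))"
    unfolding eps_inf_SC_def a_def b_def c_def by simp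
  have 2: "(\<lambda>g. eps_SC NT NR R \<beta> g) \<sim>[at_top] (\<lambda>g. eps_inf_SC NT NR R \<beta> g)"
    unfolding eS iS by (rule gen_equiv[OF ab Dp[of "NT*NR*1"] c0])
  from 1 2 show ?thesis ..
qed

end
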